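(* Let $A$ be a finite abelian group, let $H$ be a subgroup of $A$, let $A_2$ be the Sylow $2$-subgroup of $A$ and $H_2$ the Sylow $2$-subgroup of $H$, and suppose $|H_2|\neq 2$. Then $\Gamma_{A_2,H_2}$ admits a perfect code if and only if $\Gamma_{A,H}$ admits a perfect code.
   Context: Abelian groups are written additively with identity $0$. For a subgroup $H$ of a finite abelian group $A$, the subgroup sum graph $\Gamma_{A,H}$ is the simple undirected graph with vertex set $A$ in which distinct vertices $x,y$ are adjacent if and only if $x+y\in H\setminus\{0\}$. A perfect code in a graph is a set $C$ of vertices that is independent and such that every vertex not in $C$ is adjacent to exactly one vertex of $C$. *)

theory Defs
  imports Main
begin

definition subgrp :: "'a::ab_group_add set \<Rightarrow> bool" where
  "subgrp H \<longleftrightarrow> 0 \<in> H \<and> (\<forall>x\<in>H. \<forall>y\<in>H. x + y \<in> H) \<and> (\<forall>x\<in>H. - x \<in> H)"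

definition sylow2_subgroup :: "'a::ab_group_add set \<Rightarrow> 'a set \<Rightarrow> bool" where
  "sylow2_subgroup S P \<longleftrightarrow> subgrp P \<and> P \<subseteq> S \<and>
     (\<exists>k::nat. card P = 2 ^ k \<and> \<not> (2::nat) ^ Suc k dvd card S)"

definition sum_adj :: "'a::ab_group_add set \<Rightarrow> 'a set \<Rightarrow> 'a \<Rightarrow> 'a \<Rightarrow> bool" where
  "sum_adj V H x y \<longleftrightarrow> x \<in> V \<and> y \<in> V \<and> x \<noteq> y \<and> x + y \<in> H - {0}"

definition perfect_code :: "'a::ab_group_add set \<Rightarrow> 'a set \<Rightarrow> 'a set \<Rightarrow> bool" where
  "perfect_code V H C \<longleftrightarrow> C \<subseteq> V \<and>
     (\<forall>x\<in>C. \<forall>y\<in>C. \<not> sum_adj V H x y) \<and>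
     (\<forall>v\<in>V - C. \<exists>!c. c \<in> C \<and> sum_adj V H v c)"

definition has_perfect_code :: "'a::ab_group_add set \<Rightarrow> 'a set \<Rightarrow> bool" where
  "has_perfect_code V H \<longleftrightarrow> (\<exists>C. perfect_code V H C)"

end

theory Submission imports Defs "HOL-Algebra.Multiplicative_Group" begin


fun nm :: "nat \<Rightarrow> 'a::ab_group_add \<Rightarrow> 'a" where
  "nm 0 x = 0" | "nm (Suc n) x = x + nm n x"

lemma nm_add: "nm (a + b) x = nm a x + nm b x"
  by (induction a) (auto simp: add.assoc)
lemma nm_mult: "nm (a * b) x = nm a (nm b x)"
  by (induction a) (auto simp: nm_add)
lemma nm_plus: "nm n (x + y) = nm n x + nm n y"
  by (induction n) (auto simp: algebra_simps)
lemma nm_minus: "nm n (- x) = - nm n x"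
  by (induction n) (auto simp: algebra_simps)
lemma nm_diff: "nm n (x - y) = nm n x - nm n y"
  using nm_plus[of n x "-y"] nm_minus[of n y] by simp
lemma nm_2: "nm 2 x = x + x"
  by (simp add: numeral_2_eq_2)
lemma nm_zero[simp]: "nm n 0 = 0"
  by (induction n) auto
lemma nm_closed: "subgrp W \<Longrightarrow> x \<in> W \<Longrightarrow> nm n x \<in> W"
  by (induction n) (auto simp: subgrp_def)

lemma sum_const_nm: "finite F \<Longrightarrow> sum (\<lambda>_. x) F = nm (card F) x"
  by (induction F rule: finite_induct) auto

lemma card_kill:
  fixes S :: "'a::{ab_group_add,finite} set"
  assumes "subgrp S" "x \<in> S"
  shows "nm (card S) x = 0"
proof -
  have bij: "bij_betw (\<lambda>y. x + y) S S"
    unfolding bij_betw_def inj_on_def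
  proof (intro conjI ballI impI)
    show "(+) x ` S = S"
    proof
      show "(+) x ` S \<subseteq> S" using assms by (auto simp: subgrp_def)
      show "S \<subseteq> (+) x ` S"
      proof
        fix z assume "z \<in> S"
        then have "- x + z \<in> S" using assms unfolding subgrp_def by blast
        then show "z \<in> (+) x ` S" by (rule rev_image_eqI) simp
      qed
    qed
  qed simp
  have "sum (\<lambda>y. y) S = sum (\<lambda>y. x + y) S"
    using sum.reindex_bij_betw[OF bij, of "\<lambda>y. y"] by simp
  also have "\<dots> = sum (\<lambda>_. x) S + sum (\<lambda>y. y) S" by (simp add: sum.distrib)
  finally show ?thesis by (simp add: sum_const_nm)
qed

definition grp :: "'a::ab_group_add set \<Rightarrow> 'a monoid" where
  "grp S = \<lparr>carrier = S, mult = (+), one = 0\<rparr>"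

lemma grp_simps[simp]: "carrier (grp S) = S" "mult (grp S) = (+)" "one (grp S) = 0"
  by (auto simp: grp_def)

lemma grp_comm_group: "subgrp S \<Longrightarrow> comm_group (grp S)"
  apply (rule comm_groupI)
  apply (auto simp: subgrp_def add.assoc add.commute)
  by (metis add.commute ab_left_minus)

lemma grp_pow: "x [^]\<^bsub>grp S\<^esub> n = nm n x"
  by (induction n) (auto simp: add.commute)

lemma grp_subgroup: "subgrp P \<Longrightarrow> P \<subseteq> S \<Longrightarrow> subgrp S \<Longrightarrow> subgroup P (grp S)"
proof -
  assume a: "subgrp P" "P \<subseteq> S" "subgrp S"
  interpret comm_group "grp S" using grp_comm_group[OF a(3)] .
  have inv: "x \<in> S \<Longrightarrow> inv\<^bsub>grp S\<^esub> x = - x" for x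
    using a(3) by (intro inv_equality) (auto simp: subgrp_def)
  show ?thesis
    using a by (intro subgroup.intro) (auto simp: inv subgrp_def)
qed

lemma index_kills:
  fixes S :: "'a::{ab_group_add,finite} set"
  assumes S: "subgrp S" and P: "subgrp P" "P \<subseteq> S" and x: "x \<in> S"
  shows "card S = card (rcosets\<^bsub>grp S\<^esub> P) * card P"
    and "nm (card (rcosets\<^bsub>grp S\<^esub> P)) x \<in> P"
proof -
  interpret comm_group "grp S" using grp_comm_group[OF S] .
  have sg: "subgroup P (grp S)" using grp_subgroup[OF P S] .
  show "card S = card (rcosets\<^bsub>grp S\<^esub> P) * card P"
    using lagrange[OF sg] by (simp add: order_def)
  have nrm: "normal P (grp S)" using subgroup_imp_normal[OF sg] .
  interpret Q: group "grp S Mod P" using normal.factorgroup_is_group[OF nrm] .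
  have pw: "(P #>\<^bsub>grp S\<^esub> x) [^]\<^bsub>grp S Mod P\<^esub> n = P #>\<^bsub>grp S\<^esub> (x [^]\<^bsub>grp S\<^esub> n)" for n :: nat
  proof (induction n)
    case 0 show ?case using subgroup.rcos_const[OF sg is_group, of 0] sg
      by (simp add: subgroup.one_closed[OF sg, simplified])
  next
    case (Suc n)
    have "x [^]\<^bsub>grp S\<^esub> n \<in> S" unfolding grp_pow using nm_closed[OF S x] .
    then show ?case
      using normal.rcos_sum[OF nrm, of "x [^]\<^bsub>grp S\<^esub> n" x] x Suc by simp
  qed
  have xc: "P #>\<^bsub>grp S\<^esub> x \<in> carrier (grp S Mod P)"
    using x by (auto simp: FactGroup_def RCOSETS_def)
  have "(P #>\<^bsub>grp S\<^esub> x) [^]\<^bsub>grp S Mod P\<^esub> order (grp S Mod P) = P"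
    using Q.pow_order_eq_1[OF xc] by simp
  moreover have "order (grp S Mod P) = card (rcosets\<^bsub>grp S\<^esub> P)"
    by (simp add: order_def FactGroup_def)
  ultimately have eq: "P #>\<^bsub>grp S\<^esub> (x [^]\<^bsub>grp S\<^esub> card (rcosets\<^bsub>grp S\<^esub> P)) = P"
    using pw by simp
  have "x [^]\<^bsub>grp S\<^esub> card (rcosets\<^bsub>grp S\<^esub> P) \<in> S" unfolding grp_pow using nm_closed[OF S x] .
  then have "x [^]\<^bsub>grp S\<^esub> card (rcosets\<^bsub>grp S\<^esub> P) \<in> P"
    using rcos_self[OF _ sg] eq by (metis grp_simps(1))
  then show "nm (card (rcosets\<^bsub>grp S\<^esub> P)) x \<in> P" by (simp add: grp_pow)
qed



lemma sg_add: "subgrp W \<Longrightarrow> x \<in> W \<Longrightarrow> y \<in> W \<Longrightarrow> x + y \<in> W"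
  by (auto simp: subgrp_def)
lemma sg_neg: "subgrp W \<Longrightarrow> x \<in> W \<Longrightarrow> - x \<in> W"
  by (auto simp: subgrp_def)
lemma sg_diff: "subgrp W \<Longrightarrow> x \<in> W \<Longrightarrow> y \<in> W \<Longrightarrow> x - y \<in> W"
  using sg_add[of W x "-y"] sg_neg[of W y] by simp
lemma sg_0: "subgrp W \<Longrightarrow> 0 \<in> W"
  by (auto simp: subgrp_def)

definition cosw :: "'a::ab_group_add set \<Rightarrow> 'a \<Rightarrow> 'a set" where
  "cosw W y = (\<lambda>h. y + h) ` W"

lemma cos_mem: "subgrp W \<Longrightarrow> z \<in> cosw W y \<longleftrightarrow> z - y \<in> W"
  unfolding cosw_def
proof
  assume "z \<in> (+) y ` W" then obtain h where "h \<in> W" "z = y + h" by auto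
  then show "z - y \<in> W" by simp
next
  assume "z - y \<in> W" then show "z \<in> (+) y ` W" by (rule rev_image_eqI) simp
qed

lemma cos_eq: assumes "subgrp W" "z - y \<in> W" shows "cosw W z = cosw W y"
proof (rule Set.set_eqI)
  fix t
  have "t - y = (t - z) + (z - y)" "t - z = (t - y) - (z - y)" by simp_all
  then show "t \<in> cosw W z \<longleftrightarrow> t \<in> cosw W y"
    using assms by (metis cos_mem sg_add sg_diff)
qed

lemma adj_sym: "sum_adj V W x y \<Longrightarrow> sum_adj V W y x"
  by (auto simp: sum_adj_def add.commute)

lemma char_fwd:
  fixes V W :: "'a::{ab_group_add,finite} set"
  assumes V: "subgrp V" and W: "subgrp W" and WV: "W \<subseteq> V" and c2: "card W \<noteq> 2"
    and pc: "perfect_code V W C"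
    and a: "a \<in> V" "a + a \<in> W"
  shows "\<exists>h\<in>W. (a + h) + (a + h) = 0"
proof (rule ccontr)
  assume nh: "\<not> ?thesis"
  define X where "X = cosw W a"
  have Xm: "x \<in> X \<longleftrightarrow> x - a \<in> W" for x unfolding X_def using cos_mem[OF W] .
  have XV: "x \<in> V" if "x \<in> X" for x
  proof -
    have "x - a \<in> V" using that Xm WV by auto
    then have "(x - a) + a \<in> V" using sg_add[OF V _ a(1)] by blast
    then show ?thesis by simp
  qed
  have X2: "x + x \<in> W" if "x \<in> X" for x
  proof -
    have "x + x = (a + a) + ((x - a) + (x - a))" by (simp add: algebra_simps)
    then show ?thesis using that Xm a(2) W by (metis sg_add)
  qed
  have X0: "x + x \<noteq> 0" if "x \<in> X" for x
  proof
    assume "x + x = 0"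
    moreover have "x = a + (x - a)" by simp
    ultimately show False using nh that Xm by metis
  qed
  have Xneg: "- x \<in> X" if "x \<in> X" for x
  proof -
    have "- x - a = (x - a) - (x + x) + (a + a) - (a + a) - (a+a) + (a + a)" by (simp add: algebra_simps)
    moreover have "- x - a = (x - a) - (x + x)" by (simp add: algebra_simps)
    ultimately show ?thesis using that Xm X2 W by (metis sg_diff)
  qed
  have Xsum: "x + y \<in> W" if "x \<in> X" "y \<in> X" for x y
  proof -
    have "x + y = (a + a) + ((x - a) + (y - a))" by (simp add: algebra_simps)
    then show ?thesis using that Xm a(2) W by (metis sg_add)
  qed
  have Xadj: "v \<in> X" if "sum_adj V W v x" "x \<in> X" for v x
  proof -
    have "v + x \<in> W" using that(1) by (simp add: sum_adj_def)
    moreover have "-x - a \<in> W" using Xneg[OF that(2)] Xm by simp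
    moreover have "v - a = (v + x) + (- x - a)" by (simp add: algebra_simps)
    ultimately show ?thesis using Xm W by (metis sg_add)
  qed
  have Cind: "\<And>x y. x \<in> C \<Longrightarrow> y \<in> C \<Longrightarrow> \<not> sum_adj V W x y" using pc by (simp add: perfect_code_def)
  have Cdom: "\<And>v. v \<in> V \<Longrightarrow> v \<notin> C \<Longrightarrow> \<exists>!c. c \<in> C \<and> sum_adj V W v c"
    using pc by (simp add: perfect_code_def)
  have aX: "a \<in> X" using Xm sg_0[OF W] by simp
  obtain c where c: "c \<in> C" "c \<in> X"
  proof (cases "a \<in> C")
    case True then show ?thesis using that aX by blast
  next
    case False
    then obtain c where "c \<in> C" "sum_adj V W a c" using Cdom[OF a(1)] by blast
    then show ?thesis using that Xadj[OF adj_sym aX] by blast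
  qed
  have adjX: "sum_adj V W x y" if "x \<in> X" "y \<in> X" "x \<noteq> y" "y \<noteq> - x" for x y
  proof -
    have "x + y \<noteq> 0" using that(4) by (metis add.commute add_eq_0_iff)
    then show ?thesis using that XV Xsum by (simp add: sum_adj_def)
  qed
  have cneg: "c \<noteq> - c" using X0[OF c(2)] by (metis add_eq_0_iff)
  have mc: "- c \<in> C"
  proof (rule ccontr)
    assume "- c \<notin> C"
    then obtain c' where c': "c' \<in> C" "sum_adj V W (- c) c'" using Cdom XV Xneg c(2) by blast
    have c'X: "c' \<in> X" using Xadj[OF adj_sym[OF c'(2)] Xneg[OF c(2)]] .
    have "c' \<noteq> c" using c'(2) by (auto simp: sum_adj_def)
    moreover have "c' \<noteq> - c" using c'(2) by (auto simp: sum_adj_def)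
    ultimately have "sum_adj V W c c'" using adjX[OF c(2) c'X] by auto
    then show False using Cind c(1) c'(1) by blast
  qed
  have cardX: "card X = card W" unfolding X_def cosw_def by (rule card_image) (simp add: inj_on_def)
  have sub: "{c, - c} \<subseteq> X" using c(2) Xneg by auto
  have "card {c, -c} = 2" using cneg by simp
  moreover have "card {c, -c} \<le> card X" using sub by (simp add: card_mono)
  ultimately have "\<not> X \<subseteq> {c, -c}" using c2 cardX sub by (metis subset_antisym)
  then obtain z where z: "z \<in> X" "z \<noteq> c" "z \<noteq> - c" by blast
  have "z \<noteq> - (- c)" using z by simp
  have a1: "sum_adj V W z c" using adjX[OF z(1) c(2) z(2)] z(3) by (metis minus_minus)
  have a2: "sum_adj V W z (- c)" using adjX[OF z(1) Xneg[OF c(2)] z(3)] z(2) by simp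
  have "z \<notin> C" using Cind[OF c(1)] adj_sym[OF a1] by blast
  then have "\<exists>!c. c \<in> C \<and> sum_adj V W z c" using Cdom XV z(1) by blast
  then show False using a1 a2 c(1) mc cneg by blast
qed



lemma char_bwd:
  fixes V W :: "'a::{ab_group_add,finite} set"
  assumes V: "subgrp V" and W: "subgrp W" and WV: "W \<subseteq> V"
    and cond: "\<forall>a\<in>V. a + a \<in> W \<longrightarrow> (\<exists>h\<in>W. (a + h) + (a + h) = 0)"
  shows "has_perfect_code V W"
proof -
  define s where "s K = (SOME t. t \<in> K)" for K :: "'a set"
  define U where "U y = cosw W y \<union> cosw W (- y)" for y
  define T where "T K = (SOME t. t \<in> K \<and> t + t = 0)" for K :: "'a set"
  define C where "C = {y\<in>V. if y + y \<in> W then y = T (cosw W y) else (y = s (U y) \<or> y = - s (U y))}"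
  have cm: "z \<in> cosw W y \<longleftrightarrow> z - y \<in> W" for z y using cos_mem[OF W] .
  have ce: "z - y \<in> W \<Longrightarrow> cosw W z = cosw W y" for z y using cos_eq[OF W] .
  have Ueq: "U y' = U y" if "y' + y \<in> W" for y y'
  proof -
    have e1: "cosw W y' = cosw W (- y)" using ce[of y' "- y"] that by simp
    have "- y' - y \<in> W" using sg_neg[OF W that] by (simp add: algebra_simps)
    then have e2: "cosw W (- y') = cosw W y" using ce by blast
    show ?thesis unfolding U_def using e1 e2 by auto
  qed
  have sU: "s (U y) \<in> U y" for y
  proof -
    have "y \<in> U y" unfolding U_def using cm sg_0[OF W] by auto
    then show ?thesis unfolding s_def by (rule someI)
  qed
  have inV: "z \<in> V" if "z + y \<in> W" "y \<in> V" for z y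
  proof -
    have "(z + y) - y \<in> V" using that WV sg_diff[OF V] by blast
    then show ?thesis by simp
  qed
  have add_in: "\<And>x y. x \<in> W \<Longrightarrow> y \<in> W \<Longrightarrow> x + y \<in> W" using sg_add[OF W] .
  have diff_in: "\<And>x y. x \<in> W \<Longrightarrow> y \<in> W \<Longrightarrow> x - y \<in> W" using sg_diff[OF W] .
  have same_sq: "x + x \<in> W \<longleftrightarrow> y + y \<in> W" if "x + y \<in> W" for x y
  proof
    assume "x + x \<in> W"
    then have "(x + y) + ((x + y) - (x + x)) \<in> W" using that add_in diff_in by blast
    moreover have "(x + y) + ((x + y) - (x + x)) = (y + y)" by (simp add: algebra_simps)
    ultimately show "y + y \<in> W" by simp
  next
    assume "y + y \<in> W"
    then have "(x + y) + ((x + y) - (y + y)) \<in> W" using that add_in diff_in by blast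
    moreover have "(x + y) + ((x + y) - (y + y)) = (x + x)" by (simp add: algebra_simps)
    ultimately show "x + x \<in> W" by simp
  qed
  have Cind: "\<not> sum_adj V W c1 c2" if "c1 \<in> C" "c2 \<in> C" for c1 c2
  proof
    assume adj: "sum_adj V W c1 c2"
    then have ne: "c1 \<noteq> c2" and sW: "c1 + c2 \<in> W" and n0: "c1 + c2 \<noteq> 0"
      by (auto simp: sum_adj_def)
    show False
    proof (cases "c1 + c1 \<in> W")
      case True
      have "c2 - c1 = (c1 + c2) - (c1 + c1)" by (simp add: algebra_simps)
      then have d: "c2 - c1 \<in> W" using diff_in sW True by metis
      have "c2 + c2 \<in> W" using same_sq[OF sW] True by simp
      then have "c2 = T (cosw W c2)" "c1 = T (cosw W c1)" using that True unfolding C_def by auto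
      then show False using ce[OF d] ne by simp
    next
      case False
      have F2: "c2 + c2 \<notin> W" using same_sq[OF sW] False by simp
      have "U c2 = U c1" using Ueq sW by (simp add: add.commute)
      then have "c1 = s (U c1) \<or> c1 = - s (U c1)" "c2 = s (U c1) \<or> c2 = - s (U c1)"
        using that False F2 unfolding C_def by auto
      then have "c1 + c2 = 0" using ne by (metis add.commute ab_left_minus)
      then show False using n0 by simp
    qed
  qed
  have Cdom: "\<exists>!c. c \<in> C \<and> sum_adj V W v c" if v: "v \<in> V" "v \<notin> C" for v
  proof (cases "v + v \<in> W")
    case True
    obtain h where h: "h \<in> W" "(v + h) + (v + h) = 0" using cond v(1) True by blast
    have "v + h \<in> cosw W v \<and> (v + h) + (v + h) = 0" using h cm by simp
    then have t: "T (cosw W v) \<in> cosw W v" "T (cosw W v) + T (cosw W v) = 0"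
      unfolding T_def by (metis (mono_tags, lifting) someI)+
    define t where "t = T (cosw W v)"
    have tv: "t - v \<in> W" using t cm t_def by simp
    have ctv: "cosw W t = cosw W v" using ce[OF tv] .
    have "t + v = (t - v) + (v + v)" by (simp add: algebra_simps)
    then have tvW: "t + v \<in> W" using add_in tv True by metis
    have tV: "t \<in> V" using inV[OF tvW v(1)] .
    have tC: "t \<in> C" unfolding C_def using tV t(2) ctv t_def sg_0[OF W] by simp
    have tne: "t \<noteq> v" using tC v(2) by auto
    have "t + v \<noteq> 0"
    proof
      assume "t + v = 0"
      then have "v = - t" by (simp add: eq_neg_iff_add_eq_0 add.commute)
      also have "- t = t" using t(2) t_def by (simp add: add_eq_0_iff)
      finally show False using tne by simp
    qed
    then have adj: "sum_adj V W v t" using tV v(1) tne tvW by (auto simp: sum_adj_def add.commute)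
    show ?thesis
    proof (rule ex1I[of _ t])
      show "t \<in> C \<and> sum_adj V W v t" using tC adj by simp
    next
      fix c assume c: "c \<in> C \<and> sum_adj V W v c"
      then have cvW: "c + v \<in> W" by (auto simp: sum_adj_def add.commute)
      have "c - v = (c + v) - (v + v)" by (simp add: algebra_simps)
      then have "c - v \<in> W" using diff_in cvW True by metis
      then have "cosw W c = cosw W v" using ce by blast
      moreover have "c + c \<in> W" using same_sq[OF cvW] True by simp
      ultimately show "c = t" using c t_def unfolding C_def by auto
    qed
  next
    case False
    define \<sigma> where "\<sigma> = s (U v)"
    define c where "c = (if \<sigma> \<in> cosw W (- v) then \<sigma> else - \<sigma>)"
    have cneg: "c - (- v) \<in> W"
    proof (cases "\<sigma> \<in> cosw W (- v)")
      case True then show ?thesis using cm c_def by simp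
    next
      case F: False
      then have "\<sigma> \<in> cosw W v" using sU \<sigma>_def unfolding U_def by auto
      then have "\<sigma> - v \<in> W" using cm by simp
      then have "- (\<sigma> - v) \<in> W" using sg_neg[OF W] by blast
      then show ?thesis using F c_def by (simp add: algebra_simps)
    qed
    have cvW: "c + v \<in> W" using cneg by simp
    have cV: "c \<in> V" using inV[OF cvW v(1)] .
    have cc: "c + c \<notin> W" using same_sq[OF cvW] False by simp
    have Ucv: "U c = U v" using Ueq[OF cvW] .
    have cs: "c = \<sigma> \<or> c = - \<sigma>" using c_def by auto
    have cC: "c \<in> C" unfolding C_def using cV cc Ucv cs \<sigma>_def by auto
    have cnev: "c \<noteq> v" using cvW False by auto
    have "c + v \<noteq> 0"
    proof
      assume "c + v = 0"
      then have "v = - c" by (simp add: eq_neg_iff_add_eq_0 add.commute)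
      then have "v = \<sigma> \<or> v = - \<sigma>" using cs by auto
      then have "v \<in> C" unfolding C_def using v(1) False \<sigma>_def by auto
      then show False using v(2) by simp
    qed
    then have adj: "sum_adj V W v c" using cV v(1) cnev cvW by (auto simp: sum_adj_def add.commute)
    show ?thesis
    proof (rule ex1I[of _ c])
      show "c \<in> C \<and> sum_adj V W v c" using cC adj by simp
    next
      fix c' assume c': "c' \<in> C \<and> sum_adj V W v c'"
      then have c'vW: "c' + v \<in> W" by (auto simp: sum_adj_def add.commute)
      have cc': "c' + c' \<notin> W" using same_sq[OF c'vW] False by simp
      have "U c' = U v" using Ueq[OF c'vW] .
      then have cs': "c' = \<sigma> \<or> c' = - \<sigma>" using c' cc' \<sigma>_def unfolding C_def by auto
      show "c' = c"
      proof (rule ccontr)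
        assume "c' \<noteq> c"
        then have "c' = - c" using cs cs' by auto
        then have "(c + v) - (c' + v) = c + c" by simp
        then have "c + c \<in> W" using diff_in cvW c'vW by metis
        then show False using cc by simp
      qed
    qed
  qed
  have "perfect_code V W C"
    unfolding perfect_code_def using Cind Cdom by (auto simp: C_def)
  then show ?thesis unfolding has_perfect_code_def by blast
qed



lemma char:
  fixes V W :: "'a::{ab_group_add,finite} set"
  assumes V: "subgrp V" and W: "subgrp W" and WV: "W \<subseteq> V" and c2: "card W \<noteq> 2"
  shows "has_perfect_code V W \<longleftrightarrow> (\<forall>a\<in>V. a + a \<in> W \<longrightarrow> (\<exists>h\<in>W. (a + h) + (a + h) = 0))"
  using char_fwd[OF V W WV c2] char_bwd[OF V W WV] unfolding has_perfect_code_def by blast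

lemma odd_decomp: "(n::nat) > 0 \<Longrightarrow> \<exists>K m. n = 2^K * m \<and> odd m"
proof (induction n rule: less_induct)
  case (less n)
  show ?case
  proof (cases "odd n")
    case True then show ?thesis by (metis power_0 mult_1)
  next
    case False
    then obtain n' where n': "n = 2 * n'" by blast
    then have "n' < n" "n' > 0" using less.prems by auto
    then obtain K m where "n' = 2^K * m" "odd m" using less.IH by blast
    then show ?thesis using n' by (metis mult.assoc power_Suc)
  qed
qed

lemma syl_torsion:
  fixes S :: "'a::{ab_group_add,finite} set"
  assumes S: "subgrp S" and syl: "sylow2_subgroup S P" and x: "x \<in> S" and t: "nm (2^L) x = 0"
  shows "x \<in> P"
proof -
  obtain k where P: "subgrp P" "P \<subseteq> S" and cP: "card P = 2^k" and nd: "\<not> (2::nat)^Suc k dvd card S"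
    using syl unfolding sylow2_subgroup_def by blast
  define r where "r = card (rcosets\<^bsub>grp S\<^esub> P)"
  have cS: "card S = r * 2^k" using index_kills(1)[OF S P x] cP r_def by simp
  have rx: "nm r x \<in> P" using index_kills(2)[OF S P x] r_def by simp
  have "odd r"
  proof
    assume "even r" then obtain r' where "r = 2 * r'" by blast
    then have "card S = 2^Suc k * r'" using cS by simp
    then show False using nd by simp
  qed
  then have r0: "r \<noteq> 0" by (metis even_zero)
  have g: "gcd r (2^L) = 1" using \<open>odd r\<close> by simp
  obtain u v where uv: "r * u = 2^L * v + 1" using bezout_nat[OF r0, of "2^L"] g by auto
  have "nm (r * u) x = nm (v * 2^L) x + nm 1 x" using uv by (simp add: nm_add mult.commute)
  also have "\<dots> = x" by (simp add: nm_mult t)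
  finally have "x = nm u (nm r x)" by (metis nm_mult mult.commute)
  then show ?thesis using nm_closed[OF P(1) rx, of u] by simp
qed

lemma syl_elem:
  fixes S :: "'a::{ab_group_add,finite} set"
  assumes syl: "sylow2_subgroup S P" and x: "x \<in> P"
  shows "nm (2^card (UNIV::'a set)) x = 0"
proof -
  obtain k where P: "subgrp P" and cP: "card P = 2^k"
    using syl unfolding sylow2_subgroup_def by blast
  have "card P \<le> card (UNIV::'a set)" by (simp add: card_mono)
  moreover have "k < 2^k" by (simp add: less_exp)
  ultimately have kN: "k \<le> card (UNIV::'a set)" using cP by linarith
  have "nm (2^card (UNIV::'a set)) x = nm (2^(card (UNIV::'a set) - k) * 2^k) x"
    using kN by (simp add: power_add[symmetric])
  also have "\<dots> = 0" using card_kill[OF P x] cP by (simp add: nm_mult)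
  finally show ?thesis .
qed

theorem corollary3p6:
  fixes H A2 H2 :: "'a::{ab_group_add, finite} set"
  assumes "subgrp H"
    and "sylow2_subgroup (UNIV :: 'a set) A2"
    and "sylow2_subgroup H H2"
    and "card H2 \<noteq> 2"
  shows "has_perfect_code A2 H2 \<longleftrightarrow> has_perfect_code (UNIV :: 'a set) H"
proof -
  note H = assms(1) and sA = assms(2) and sH = assms(3)
  define N where "N = card (UNIV :: 'a set)"
  have U: "subgrp (UNIV :: 'a set)" by (simp add: subgrp_def)
  have A2: "subgrp A2" using sA by (simp add: sylow2_subgroup_def)
  have H2: "subgrp H2" "H2 \<subseteq> H" using sH by (auto simp: sylow2_subgroup_def)
  have H2A2: "H2 \<subseteq> A2"
    using syl_elem[OF sH] syl_torsion[OF U sA] by blast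
  have cH: "card H \<noteq> 2"
  proof
    assume c: "card H = 2"
    obtain k where cP: "card H2 = 2^k" and nd: "\<not> (2::nat)^Suc k dvd card H"
      using sH unfolding sylow2_subgroup_def by blast
    have "card H2 \<le> 2" using c H2(2) by (metis card_mono finite)
    then have "k \<le> 1" using cP by (metis One_nat_def le_Suc_eq not_less_eq_eq power_increasing_iff one_less_numeral_iff semiring_norm(76) power_one_right)
    then have "k = 0 \<or> k = 1" by auto
    then show False using c cP nd assms(4) by auto
  qed
  have N0: "N > 0" unfolding N_def by (simp add: finite_UNIV_card_ge_0)
  obtain K m where Km: "N = 2^K * m" "odd m" using odd_decomp[OF N0] by blast
  have "2^K \<le> N" using Km by (metis dvd_triv_left dvd_imp_le N0)
  moreover have "N < 2^N" by (simp add: less_exp)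
  ultimately have KN: "K \<le> N" by (metis less_le_trans nat_less_le power_less_imp_less_exp one_less_numeral_iff semiring_norm(76) linorder_not_le)
  have m0: "m \<noteq> 0" using Km(2) by (metis even_zero)
  have "gcd m (2^N) = 1" using Km(2) by simp
  then obtain u v where uv: "m * u = 2^N * v + 1" using bezout_nat[OF m0, of "2^N"] by auto
  define e where "e = m * u"
  have killN: "nm (q * N) y = 0" for q and y :: 'a
    using card_kill[OF U, of y] N_def by (simp add: nm_mult)
  have mN: "2^N * m = (2^(N-K)) * N" using KN Km(1) by (simp add: power_add[symmetric] mult.assoc)
  have E1: "nm (2^N) (nm e y) = 0" for y :: 'a
  proof -
    have "2^N * e = (2^(N-K) * u) * N" unfolding e_def using mN by (metis mult.assoc mult.commute)
    then show ?thesis using killN by (metis nm_mult)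
  qed
  have E2: "nm e x = x" if "nm (2^N) x = 0" for x :: 'a
    unfolding e_def uv using that by (simp add: nm_add nm_mult mult.commute)
  have E3: "nm m (y - nm e y) = 0" for y :: 'a
  proof -
    have "m * e = (2^(N-K) * v) * N + m" unfolding e_def uv using mN
      by (simp add: algebra_simps)
    then have "nm m (nm e y) = nm m y" by (metis nm_mult nm_add killN add_0)
    then show ?thesis by (simp add: nm_diff)
  qed
  obtain q where q: "m = Suc (q * 2)" using Km(2) by (metis oddE mult.commute Suc_eq_plus1)
  have oddk: "z = - nm q (z + z)" if "nm m z = 0" for z :: 'a
  proof -
    have "z + nm q (z + z) = 0" using that q by (simp add: nm_mult nm_2[symmetric])
    then show ?thesis by (simp add: eq_neg_iff_add_eq_0)
  qed
  have "has_perfect_code A2 H2 \<longleftrightarrow> (\<forall>a\<in>A2. a + a \<in> H2 \<longrightarrow> (\<exists>h\<in>H2. (a + h) + (a + h) = 0))"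
    using char[OF A2 H2(1) H2A2 assms(4)] .
  also have "\<dots> \<longleftrightarrow> (\<forall>a\<in>(UNIV::'a set). a + a \<in> H \<longrightarrow> (\<exists>h\<in>H. (a + h) + (a + h) = 0))"
  proof
    assume c2: "\<forall>a\<in>A2. a + a \<in> H2 \<longrightarrow> (\<exists>h\<in>H2. (a + h) + (a + h) = 0)"
    show "\<forall>a\<in>(UNIV::'a set). a + a \<in> H \<longrightarrow> (\<exists>h\<in>H. (a + h) + (a + h) = 0)"
    proof (intro ballI impI)
      fix a :: 'a assume aH: "a + a \<in> H"
      define a2 where "a2 = nm e a"
      define ao where "ao = a - a2"
      have a2A: "a2 \<in> A2" using syl_torsion[OF U sA _ E1[of a]] a2_def N_def by simp
      have "a2 + a2 = nm e (a + a)" unfolding a2_def by (simp add: nm_plus)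
      then have a2H: "a2 + a2 \<in> H" using nm_closed[OF H aH] by simp
      have "nm (2^N) (a2 + a2) = 0" using E1[of a] a2_def by (simp add: nm_plus)
      then have "a2 + a2 \<in> H2" using syl_torsion[OF H sH a2H] by blast
      then obtain h2 where h2: "h2 \<in> H2" "(a2 + h2) + (a2 + h2) = 0" using c2 a2A by blast
      have "ao + ao = (a + a) - (a2 + a2)" unfolding ao_def by (simp add: algebra_simps)
      then have aoH: "ao + ao \<in> H" using sg_diff[OF H aH a2H] by simp
      have "ao = - nm q (ao + ao)" using oddk E3[of a] ao_def a2_def by simp
      then have "ao \<in> H" using nm_closed[OF H aoH] sg_neg[OF H] by metis
      then have hH: "h2 - ao \<in> H" using sg_diff[OF H] h2(1) H2(2) by blast
      have "a + (h2 - ao) = a2 + h2" unfolding ao_def by simp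
      then show "\<exists>h\<in>H. (a + h) + (a + h) = 0" using hH h2(2) by metis
    qed
  next
    assume cA: "\<forall>a\<in>(UNIV::'a set). a + a \<in> H \<longrightarrow> (\<exists>h\<in>H. (a + h) + (a + h) = 0)"
    show "\<forall>a\<in>A2. a + a \<in> H2 \<longrightarrow> (\<exists>h\<in>H2. (a + h) + (a + h) = 0)"
    proof (intro ballI impI)
      fix a assume aA: "a \<in> A2" and aH2: "a + a \<in> H2"
      then obtain h where h: "h \<in> H" "(a + h) + (a + h) = 0" using cA H2(2) by blast
      have h'H: "nm e h \<in> H" using nm_closed[OF H h(1)] .
      have h'H2: "nm e h \<in> H2" using syl_torsion[OF H sH h'H E1[of h]] .
      have ea: "nm e a = a" using E2 syl_elem[OF sA aA] N_def by simp
      have "(a + nm e h) + (a + nm e h) = nm e ((a + h) + (a + h))"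
        using ea by (simp add: nm_plus)
      then show "\<exists>h\<in>H2. (a + h) + (a + h) = 0" using h(2) h'H2 by auto
    qed
  qed
  also have "\<dots> \<longleftrightarrow> has_perfect_code (UNIV :: 'a set) H"
    using char[OF U H _ cH] by simp
  finally show ?thesis .
qed


end
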